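(* Let $\bm{\mu}\in X^{\mathcal{L}(\mathcal{T})}$. For every node $s\in S$: if $a_{s_0}(\bm{\mu})=$'win' then $d_s(\bm{\mu})>0\iff V_s(\bm{\mu})>\theta$; if $a_{s_0}(\bm{\mu})=$'lose' then $d_s(\bm{\mu})>0\iff V_s(\bm{\mu})<\theta$.
   Context: $\mathcal{T}$ is a finite rooted tree with node set $S$, root $s_0$, children $\mathcal{C}(s)$, leaves $\mathcal{L}(\mathcal{T})$; internal labels $L(s)\in\{\text{MAX},\text{MIN}\}$. $X\subseteq\mathbb{R}$ mean-parameter set of a one-parameter exponential family; $d(x,y)$ KL divergence between members with means $x,y$ (nonnegative, zero iff $x=y$); threshold $\theta\in X$. $V_s(\bm{\mu})=\mu_s$ at leaves, max/min of children's values at MAX/MIN nodes; $a_s(\bm{\mu})=$'win' iff $V_s(\bm{\mu})\ge\theta$. Define $d_s(\bm{\mu})$ bottom-up: let $a^*=a_{s_0}(\bm{\mu})$, $P=$MAX, $Q=$MIN if $a^*=$'win' and $P=$MIN, $Q=$MAX if 'lose'. Leaf $s$: $d_s=d(\mu_s,\theta)$ if ($a^*=$'win', $\mu_s\ge\theta$) or ($a^*=$'lose', $\mu_s<\theta$), else $0$. $L(s)=P$: $d_s=\max_{c\in\mathcal{C}(s)}d_c$. $L(s)=Q$: $d_s=(\sum_{c}1/d_c)^{-1}$ if $d_c>0$ for all $c\in\mathcal{C}(s)$, and $d_s=0$ otherwise. *)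

theory Defs
  imports Complex_Main
begin

datatype player = PMax | PMin

datatype 'l gtree = Leaf 'l | Inner player "'l gtree list"

fun wf_tree :: "'l gtree \<Rightarrow> bool" where
  "wf_tree (Leaf l) = True"
| "wf_tree (Inner p cs) = (cs \<noteq> [] \<and> (\<forall>c\<in>set cs. wf_tree c))"

text \<open>The node set of a tree (each node identified with the subtree rooted at it).\<close>
fun nodes :: "'l gtree \<Rightarrow> 'l gtree set" where
  "nodes (Leaf l) = {Leaf l}"
| "nodes (Inner p cs) = insert (Inner p cs) (\<Union>c\<in>set cs. nodes c)"

fun leaves :: "'l gtree \<Rightarrow> 'l set" where
  "leaves (Leaf l) = {l}"
| "leaves (Inner p cs) = (\<Union>c\<in>set cs. leaves c)"

fun val :: "('l \<Rightarrow> real) \<Rightarrow> 'l gtree \<Rightarrow> real" where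
  "val \<mu> (Leaf l) = \<mu> l"
| "val \<mu> (Inner PMax cs) = Max (set (map (val \<mu>) cs))"
| "val \<mu> (Inner PMin cs) = Min (set (map (val \<mu>) cs))"

definition wins :: "('l \<Rightarrow> real) \<Rightarrow> real \<Rightarrow> 'l gtree \<Rightarrow> bool" where
  "wins \<mu> \<theta> s \<longleftrightarrow> val \<mu> s \<ge> \<theta>"

text \<open>d_s(mu), computed bottom-up; the parameter w is the root answer a* (True = 'win').
  P = MAX, Q = MIN if w, and P = MIN, Q = MAX otherwise.\<close>
fun dval :: "(real \<Rightarrow> real \<Rightarrow> real) \<Rightarrow> real \<Rightarrow> bool \<Rightarrow> ('l \<Rightarrow> real) \<Rightarrow> 'l gtree \<Rightarrow> real" where
  "dval d \<theta> w \<mu> (Leaf l) =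
     (if (w \<and> \<mu> l \<ge> \<theta>) \<or> (\<not> w \<and> \<mu> l < \<theta>) then d (\<mu> l) \<theta> else 0)"
| "dval d \<theta> w \<mu> (Inner p cs) =
     (if (p = PMax) = w then Max (set (map (dval d \<theta> w \<mu>) cs))
      else if (\<forall>c\<in>set cs. dval d \<theta> w \<mu> c > 0)
           then inverse (sum_list (map (\<lambda>c. 1 / dval d \<theta> w \<mu> c) cs))
           else 0)"

definition dnode :: "(real \<Rightarrow> real \<Rightarrow> real) \<Rightarrow> real \<Rightarrow> ('l \<Rightarrow> real) \<Rightarrow> 'l gtree \<Rightarrow> 'l gtree \<Rightarrow> real" where
  "dnode d \<theta> \<mu> s0 s = dval d \<theta> (wins \<mu> \<theta> s0) \<mu> s"

end

theory Submission
  imports Defs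
begin

lemma sum_list_pos_aux:
  "cs \<noteq> [] \<Longrightarrow> (\<forall>c\<in>set cs. (f c::real) > 0) \<Longrightarrow> sum_list (map f cs) > 0"
proof (induction cs)
  case Nil then show ?case by simp
next
  case (Cons a cs)
  then show ?case
    by (cases "cs = []") (auto intro: add_pos_pos)
qed

lemma nodes_sub:
  "s \<in> nodes t \<Longrightarrow> wf_tree t \<Longrightarrow> wf_tree s \<and> leaves s \<subseteq> leaves t"
proof (induction t)
  case (Leaf x) then show ?case by simp
next
  case (Inner p cs)
  show ?case
  proof (cases "s = Inner p cs")
    case True then show ?thesis using Inner.prems by simp
  next
    case False
    then obtain c where c: "c \<in> set cs" "s \<in> nodes c" using Inner.prems by auto
    then have "wf_tree s \<and> leaves s \<subseteq> leaves c" using Inner.IH[OF c] Inner.prems by simp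
    then show ?thesis using c by auto
  qed
qed

lemma main:
  fixes d :: "real \<Rightarrow> real \<Rightarrow> real"
  assumes d_nonneg: "\<And>x y. x \<in> X \<Longrightarrow> y \<in> X \<Longrightarrow> d x y \<ge> 0"
    and d_zero: "\<And>x y. x \<in> X \<Longrightarrow> y \<in> X \<Longrightarrow> d x y = 0 \<longleftrightarrow> x = y"
    and theta: "\<theta> \<in> X"
  shows "wf_tree t \<Longrightarrow> (\<forall>l\<in>leaves t. \<mu> l \<in> X) \<Longrightarrow>
     dval d \<theta> w \<mu> t \<ge> 0 \<and>
     (w \<longrightarrow> (dval d \<theta> w \<mu> t > 0 \<longleftrightarrow> val \<mu> t > \<theta>)) \<and>
     (\<not> w \<longrightarrow> (dval d \<theta> w \<mu> t > 0 \<longleftrightarrow> val \<mu> t < \<theta>))"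
proof (induction t)
  case (Leaf l)
  have X: "\<mu> l \<in> X" using Leaf by simp
  have "d (\<mu> l) \<theta> \<ge> 0" using d_nonneg X theta by simp
  moreover have "d (\<mu> l) \<theta> = 0 \<longleftrightarrow> \<mu> l = \<theta>" using d_zero X theta by simp
  ultimately show ?case by auto
next
  case (Inner p cs)
  have ne: "cs \<noteq> []" using Inner.prems by simp
  have IH: "\<And>c. c \<in> set cs \<Longrightarrow> dval d \<theta> w \<mu> c \<ge> 0 \<and>
     (w \<longrightarrow> (dval d \<theta> w \<mu> c > 0 \<longleftrightarrow> val \<mu> c > \<theta>)) \<and>
     (\<not> w \<longrightarrow> (dval d \<theta> w \<mu> c > 0 \<longleftrightarrow> val \<mu> c < \<theta>))"
    using Inner by auto
  let ?D = "dval d \<theta> w \<mu>"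
  have fin: "finite (set (map f cs))" "set (map f cs) \<noteq> {}" for f :: "'a gtree \<Rightarrow> real"
    using ne by auto
  have MaxD: "Max (set (map ?D cs)) > 0 \<longleftrightarrow> (\<exists>c\<in>set cs. ?D c > 0)"
    using Max_gr_iff[OF fin] by auto
  have MaxD0: "Max (set (map ?D cs)) \<ge> 0"
  proof -
    obtain c where "c \<in> set cs" using ne by (cases cs) auto
    then show ?thesis using IH[of c] Max_ge_iff[OF fin] by auto
  qed
  have harm: "(\<forall>c\<in>set cs. ?D c > 0) \<Longrightarrow> inverse (sum_list (map (\<lambda>c. 1 / ?D c) cs)) > 0"
    using sum_list_pos_aux[OF ne, of "\<lambda>c. 1 / ?D c"] by auto
  have v1: "Max (set (map (val \<mu>) cs)) > \<theta> \<longleftrightarrow> (\<exists>c\<in>set cs. val \<mu> c > \<theta>)"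
    using Max_gr_iff[OF fin] by auto
  have v2: "Max (set (map (val \<mu>) cs)) < \<theta> \<longleftrightarrow> (\<forall>c\<in>set cs. val \<mu> c < \<theta>)"
    using Max_less_iff[OF fin] by auto
  have v3: "Min (set (map (val \<mu>) cs)) > \<theta> \<longleftrightarrow> (\<forall>c\<in>set cs. val \<mu> c > \<theta>)"
    using Min_gr_iff[OF fin] by auto
  have v4: "Min (set (map (val \<mu>) cs)) < \<theta> \<longleftrightarrow> (\<exists>c\<in>set cs. val \<mu> c < \<theta>)"
    using Min_less_iff[OF fin] by auto
  show ?case
  proof (cases p)
    case PMax
    then show ?thesis
      using MaxD MaxD0 harm v1 v2 IH by (cases w) auto
  next
    case PMin
    then show ?thesis
      using MaxD MaxD0 harm v3 v4 IH by (cases w) auto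
  qed
qed

theorem proposition8:
  fixes T :: "'l gtree" and \<mu> :: "'l \<Rightarrow> real" and X :: "real set"
    and d :: "real \<Rightarrow> real \<Rightarrow> real" and \<theta> :: real
  assumes wf: "wf_tree T"
    and d_nonneg: "\<And>x y. x \<in> X \<Longrightarrow> y \<in> X \<Longrightarrow> d x y \<ge> 0"
    and d_zero: "\<And>x y. x \<in> X \<Longrightarrow> y \<in> X \<Longrightarrow> d x y = 0 \<longleftrightarrow> x = y"
    and theta: "\<theta> \<in> X"
    and mu: "\<And>l. l \<in> leaves T \<Longrightarrow> \<mu> l \<in> X"
  shows "\<forall>s\<in>nodes T.
           (wins \<mu> \<theta> T \<longrightarrow> (dnode d \<theta> \<mu> T s > 0 \<longleftrightarrow> val \<mu> s > \<theta>)) \<and>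
           (\<not> wins \<mu> \<theta> T \<longrightarrow> (dnode d \<theta> \<mu> T s > 0 \<longleftrightarrow> val \<mu> s < \<theta>))"
proof
  fix s assume s: "s \<in> nodes T"
  have "wf_tree s" "\<forall>l\<in>leaves s. \<mu> l \<in> X" using nodes_sub[OF s wf] mu by auto
  from main[OF d_nonneg d_zero theta this, of "wins \<mu> \<theta> T"]
  show "(wins \<mu> \<theta> T \<longrightarrow> (dnode d \<theta> \<mu> T s > 0 \<longleftrightarrow> val \<mu> s > \<theta>)) \<and>
           (\<not> wins \<mu> \<theta> T \<longrightarrow> (dnode d \<theta> \<mu> T s > 0 \<longleftrightarrow> val \<mu> s < \<theta>))"
    unfolding dnode_def by blast
qed

end
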